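(* Encode Tower of Hanoi configurations with $n$ disks on pegs $0,1,2$ by words $x_1\dots x_n\in\{0,1,2\}^n$ (disk $j$, the $j$-th smallest, on peg $x_j$). Let $\Gamma_n$ be the graph on $\{0,1,2\}^n$ with $u\sim v$ iff $v=a_{xy}(u)\ne u$ for some $0\le x<y\le2$, where $a_{xy}$ changes the first occurrence in $u$ of $x$ or $y$ into the other symbol. For distinct $x,y$ let the unique shortest path from $x^n$ to $y^n$ in $\Gamma_n$ be called the geodesic from $x^n$ to $y^n$. Define the partial inverse transducer with states $q_{xy}^{-1}$ for ordered pairs of distinct $x,y\in\{0,1,2\}$ (with $z$ the third element): from state $q_{xy}^{-1}$, reading the letter $x$ outputs $0$ and moves to $q_{xz}^{-1}$, reading $y$ outputs $1$ and moves to $q_{zy}^{-1}$, and reading $z$ is undefined (the computation stops). Then for all $n\ge1$, distinct $x,y$, and every ternary word $u$ of length $n$: starting at $q_{xy}^{-1}$, the word $u$ is read entirely if and only if $u^R$ is a configuration on the geodesic from $x^n$ to $y^n$; and in that case, if $u^R$ is at distance $i$ from $x^n$ along this geodesic, the output produced is $[i]_2^R$, where $[i]_2$ is the length-$n$ binary representation of $i$ with least significant digit first (padded with zeros).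
   Context: $R$ denotes word reversal. *)

theory Defs
  imports Main
begin

text \<open>Ternary words over the alphabet {0,1,2} (pegs), represented as nat lists.
  A configuration x_1...x_n has disk j (the j-th smallest) on peg x_j.\<close>

definition hanoi_vertices :: "nat \<Rightarrow> nat list set" where
  "hanoi_vertices n = {u. length u = n \<and> set u \<subseteq> {0,1,2}}"

fun hanoi_act :: "nat \<Rightarrow> nat \<Rightarrow> nat list \<Rightarrow> nat list" where
  "hanoi_act x y [] = []"
| "hanoi_act x y (c # cs) =
     (if c = x then y # cs else if c = y then x # cs else c # hanoi_act x y cs)"

definition hanoi_adj :: "nat \<Rightarrow> nat list \<Rightarrow> nat list \<Rightarrow> bool" where
  "hanoi_adj n u v \<longleftrightarrow> u \<in> hanoi_vertices n \<and> v \<in> hanoi_vertices n \<and>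
     (\<exists>x y. x < y \<and> y \<le> 2 \<and> v = hanoi_act x y u \<and> v \<noteq> u)"

definition hanoi_path :: "nat \<Rightarrow> nat list \<Rightarrow> nat list \<Rightarrow> nat list list \<Rightarrow> bool" where
  "hanoi_path n a b p \<longleftrightarrow> p \<noteq> [] \<and> hd p = a \<and> last p = b \<and>
     set p \<subseteq> hanoi_vertices n \<and>
     (\<forall>k. Suc k < length p \<longrightarrow> hanoi_adj n (p ! k) (p ! Suc k))"

definition hanoi_shortest_path :: "nat \<Rightarrow> nat list \<Rightarrow> nat list \<Rightarrow> nat list list \<Rightarrow> bool" where
  "hanoi_shortest_path n a b p \<longleftrightarrow> hanoi_path n a b p \<and>
     (\<forall>q. hanoi_path n a b q \<longrightarrow> length p \<le> length q)"

definition hanoi_geodesic :: "nat \<Rightarrow> nat \<Rightarrow> nat \<Rightarrow> nat list list" where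
  "hanoi_geodesic n x y = (THE p. hanoi_shortest_path n (replicate n x) (replicate n y) p)"

text \<open>The partial inverse transducer: state q_xy^{-1} is encoded by the pair (x,y);
  None means the computation stops (reading undefined).\<close>
definition third :: "nat \<Rightarrow> nat \<Rightarrow> nat" where
  "third x y = 3 - x - y"

fun inv_transducer :: "nat \<Rightarrow> nat \<Rightarrow> nat list \<Rightarrow> nat list option" where
  "inv_transducer x y [] = Some []"
| "inv_transducer x y (c # cs) =
     (if c = x then map_option (Cons 0) (inv_transducer x (third x y) cs)
      else if c = y then map_option (Cons 1) (inv_transducer (third x y) y cs)
      else None)"

definition bin_lsb :: "nat \<Rightarrow> nat \<Rightarrow> nat list" where
  "bin_lsb n i = map (\<lambda>j. (i div 2 ^ j) mod 2) [0..<n]"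

end

theory Submission
  imports Defs
begin

lemma third_props:
  assumes "x \<le> 2" "y \<le> 2" "x \<noteq> y"
  shows "third x y \<le> 2" "third x y \<noteq> x" "third x y \<noteq> y"
    "third x (third x y) = y" "third (third x y) y = x" "third y x = third x y"
  using assms unfolding third_def by arith+

lemma third_unique:
  assumes "x \<le> 2" "y \<le> 2" "x \<noteq> y" "c \<le> 2" "c \<noteq> x" "c \<noteq> y"
  shows "c = third x y"
  using assms unfolding third_def by auto

lemma act_length[simp]: "length (hanoi_act a b w) = length w"
  by (induction w) auto

lemma act_noop: "a \<notin> set w \<Longrightarrow> b \<notin> set w \<Longrightarrow> hanoi_act a b w = w"
  by (induction w) auto

lemma act_snoc: "hanoi_act a b (w @ [d]) =
   (if a \<in> set w \<or> b \<in> set w then hanoi_act a b w @ [d] else w @ hanoi_act a b [d])"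
  by (induction w) auto

lemma vert_snoc: "(w @ [d] \<in> hanoi_vertices (Suc m)) = (w \<in> hanoi_vertices m \<and> d \<le> 2)"
  unfolding hanoi_vertices_def by auto

lemma adj_snoc:
  assumes "hanoi_adj m w w'" "d \<le> 2"
  shows "hanoi_adj (Suc m) (w @ [d]) (w' @ [d])"
proof -
  obtain a b where ab: "a < b" "b \<le> 2" "w' = hanoi_act a b w" "w' \<noteq> w"
    using assms(1) unfolding hanoi_adj_def by blast
  have "a \<in> set w \<or> b \<in> set w" using ab act_noop by metis
  then have "hanoi_act a b (w @ [d]) = w' @ [d]" using ab by (simp add: act_snoc)
  moreover have "w' @ [d] \<noteq> w @ [d]" using ab by simp
  ultimately show ?thesis using assms ab unfolding hanoi_adj_def
    by (simp add: vert_snoc) (metis ab(1,2))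
qed

lemma adj_decomp:
  assumes "hanoi_adj (Suc m) (w @ [d]) (w' @ [d'])"
  shows "(d = d' \<and> hanoi_adj m w w') \<or> (d \<noteq> d' \<and> w' = w \<and> w = replicate m (third d d'))"
proof -
  obtain a b where ab: "a < b" "b \<le> 2" "w' @ [d'] = hanoi_act a b (w @ [d])" "w' @ [d'] \<noteq> w @ [d]"
    using assms(1) unfolding hanoi_adj_def by blast
  have v: "w \<in> hanoi_vertices m" "d \<le> 2" "w' \<in> hanoi_vertices m" "d' \<le> 2"
    using assms unfolding hanoi_adj_def by (auto simp: vert_snoc)
  show ?thesis
  proof (cases "a \<in> set w \<or> b \<in> set w")
    case True
    then have "w' = hanoi_act a b w" "d' = d" using ab(3) by (auto simp: act_snoc)
    moreover have "w' \<noteq> w" using ab(4) \<open>d' = d\<close> by simp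
    ultimately show ?thesis using ab v unfolding hanoi_adj_def by blast
  next
    case False
    then have e: "w' = w" "[d'] = hanoi_act a b [d]" using ab(3) by (auto simp: act_snoc)
    then have dd: "d' \<noteq> d" "(d = a \<and> d' = b) \<or> (d = b \<and> d' = a)"
      using ab(4) by (auto split: if_splits)
    have "\<forall>c\<in>set w. c = third d d'"
    proof
      fix c assume "c \<in> set w"
      then have "c \<le> 2" "c \<noteq> a" "c \<noteq> b" using v False unfolding hanoi_vertices_def by auto
      then show "c = third d d'" using dd ab v third_unique by metis
    qed
    then have "w = replicate m (third d d')"
      using v(1) replicate_length_same unfolding hanoi_vertices_def by fastforce
    then show ?thesis using e dd by auto
  qed
qed

lemma path_snoc:
  assumes "hanoi_path m a b p" "d \<le> 2"
  shows "hanoi_path (Suc m) (a @ [d]) (b @ [d]) (map (\<lambda>w. w @ [d]) p)"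
  using assms unfolding hanoi_path_def
  by (auto simp: hd_map last_map vert_snoc adj_snoc)

lemma path_append:
  assumes "hanoi_path n a b p" "hanoi_path n b' c q" "hanoi_adj n b b'"
  shows "hanoi_path n a c (p @ q)"
  unfolding hanoi_path_def
proof (intro conjI allI impI)
  show "p @ q \<noteq> []" "hd (p @ q) = a" "last (p @ q) = c" "set (p @ q) \<subseteq> hanoi_vertices n"
    using assms unfolding hanoi_path_def by auto
  fix k assume k: "Suc k < length (p @ q)"
  consider "Suc k < length p" | "Suc k = length p" | "Suc k > length p" by linarith
  then show "hanoi_adj n ((p @ q) ! k) ((p @ q) ! Suc k)"
  proof cases
    case 1 then show ?thesis using assms(1) unfolding hanoi_path_def by (simp add: nth_append)
  next
    case 2
    then have kk: "k = length p - 1" by simp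
    have "(p @ q) ! k = b" "(p @ q) ! Suc k = b'" using assms 2 unfolding hanoi_path_def kk
      by (auto simp: nth_append last_conv_nth hd_conv_nth)
    then show ?thesis using assms(3) by simp
  next
    case 3
    then have "Suc (k - length p) < length q" using k by auto
    then show ?thesis using 3 assms(2) unfolding hanoi_path_def
      by (auto simp: nth_append Suc_diff_le)
  qed
qed

fun geo :: "nat \<Rightarrow> nat \<Rightarrow> nat \<Rightarrow> nat list list" where
  "geo 0 x y = [[]]"
| "geo (Suc n) x y = map (\<lambda>w. w @ [x]) (geo n x (third x y)) @ map (\<lambda>w. w @ [y]) (geo n (third x y) y)"

lemma geo_path:
  "x \<le> 2 \<Longrightarrow> y \<le> 2 \<Longrightarrow> x \<noteq> y \<Longrightarrow>
   hanoi_path n (replicate n x) (replicate n y) (geo n x y) \<and> length (geo n x y) = 2 ^ n"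
proof (induction n arbitrary: x y)
  case 0
  then show ?case unfolding hanoi_path_def hanoi_vertices_def by auto
next
  case (Suc m)
  define z where "z = third x y"
  have z: "z \<le> 2" "z \<noteq> x" "z \<noteq> y" "third x z = y" "third z y = x"
    using third_props[OF Suc.prems] unfolding z_def by auto
  have p1: "hanoi_path m (replicate m x) (replicate m z) (geo m x z)" "length (geo m x z) = 2^m"
    using Suc.IH[of x z] Suc.prems z by auto
  have p2: "hanoi_path m (replicate m z) (replicate m y) (geo m z y)" "length (geo m z y) = 2^m"
    using Suc.IH[of z y] Suc.prems z by auto
  have adj: "hanoi_adj (Suc m) (replicate m z @ [x]) (replicate m z @ [y])"
  proof -
    have "hanoi_act (min x y) (max x y) (replicate m z @ [x]) = replicate m z @ [y]"
      using z Suc.prems by (auto simp: act_snoc)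
    moreover have "replicate m z @ [x] \<in> hanoi_vertices (Suc m)"
      "replicate m z @ [y] \<in> hanoi_vertices (Suc m)"
      using z Suc.prems unfolding hanoi_vertices_def by auto
    moreover have "min x y < max x y" "max x y \<le> 2" using Suc.prems by auto
    moreover have "replicate m z @ [y] \<noteq> replicate m z @ [x]" using Suc.prems by simp
    ultimately show ?thesis unfolding hanoi_adj_def by metis
  qed
  have "hanoi_path (Suc m) (replicate m x @ [x]) (replicate m y @ [y]) (geo (Suc m) x y)"
    unfolding geo.simps z_def[symmetric]
    by (rule path_append[OF path_snoc[OF p1(1)] path_snoc[OF p2(1)] adj]) (use Suc.prems in auto)
  then show ?case using p1 p2 by (simp add: replicate_append_same z_def)
qed

lemma path_take:
  assumes "hanoi_path n a b p" "0 < j" "j \<le> length p"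
  shows "hanoi_path n a (p ! (j - 1)) (take j p)"
  using assms unfolding hanoi_path_def
  by (auto simp: last_conv_nth hd_conv_nth dest: in_set_takeD)

lemma path_drop:
  assumes "hanoi_path n a b p" "k < length p"
  shows "hanoi_path n (p ! k) b (drop k p)"
  using assms unfolding hanoi_path_def
  by (auto simp: hd_drop_conv_nth dest: in_set_dropD)

lemma path_proj:
  assumes "hanoi_path (Suc m) a b p" "\<forall>q\<in>set p. last q = d"
  shows "hanoi_path m (butlast a) (butlast b) (map butlast p)"
  unfolding hanoi_path_def
proof (intro conjI allI impI)
  have P: "p \<noteq> []" "hd p = a" "last p = b" "set p \<subseteq> hanoi_vertices (Suc m)"
    "\<And>k. Suc k < length p \<Longrightarrow> hanoi_adj (Suc m) (p ! k) (p ! Suc k)"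
    using assms(1) unfolding hanoi_path_def by auto
  have dec: "\<And>q. q \<in> set p \<Longrightarrow> q = butlast q @ [d]"
  proof -
    fix q assume q: "q \<in> set p"
    then have "length q = Suc m" using P(4) unfolding hanoi_vertices_def by auto
    then have "q \<noteq> []" by auto
    then show "q = butlast q @ [d]" using assms(2) q append_butlast_last_id by metis
  qed
  show "map butlast p \<noteq> []" "hd (map butlast p) = butlast a" "last (map butlast p) = butlast b"
    using P by (auto simp: hd_map last_map)
  show "set (map butlast p) \<subseteq> hanoi_vertices m"
  proof
    fix w assume "w \<in> set (map butlast p)"
    then obtain q where q: "q \<in> set p" "w = butlast q" by auto
    then have "q \<in> hanoi_vertices (Suc m)" using P by auto
    then show "w \<in> hanoi_vertices m" using q dec vert_snoc by metis
  qed
  fix k assume k: "Suc k < length (map butlast p)"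
  then have "hanoi_adj (Suc m) (butlast (p ! k) @ [d]) (butlast (p ! Suc k) @ [d])"
    using P(5)[of k] dec[of "p ! k"] dec[of "p ! Suc k"] by simp
  from adj_decomp[OF this] show "hanoi_adj m (map butlast p ! k) (map butlast p ! Suc k)"
    using k by simp
qed

lemma butlast_replicate: "butlast (replicate (Suc m) x) = replicate m x"
  by (induction m) auto

lemma snoc_restore:
  assumes "\<forall>q\<in>set T. last q = d" "\<forall>q\<in>set T. q \<noteq> []"
  shows "map (\<lambda>w. w @ [d]) (map butlast T) = T"
proof -
  have "map (\<lambda>w. w @ [d]) (map butlast T) = map (\<lambda>w. butlast w @ [d]) T" by simp
  also have "\<dots> = T" using assms by (intro map_idI) (metis append_butlast_last_id)
  finally show ?thesis .
qed

lemma geo_unique: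
  "x \<le> 2 \<Longrightarrow> y \<le> 2 \<Longrightarrow> x \<noteq> y \<Longrightarrow> hanoi_path n (replicate n x) (replicate n y) p \<Longrightarrow>
   2 ^ n \<le> length p \<and> (length p = 2 ^ n \<longrightarrow> p = geo n x y)"
proof (induction n arbitrary: x y p)
  case 0
  then have P: "p \<noteq> []" "set p \<subseteq> hanoi_vertices 0" unfolding hanoi_path_def by auto
  then have "\<forall>q\<in>set p. q = []" unfolding hanoi_vertices_def by auto
  moreover have "length p = 1 \<Longrightarrow> p = [hd p]" using P(1)
    by (metis One_nat_def append_butlast_last_id append_eq_Cons_conv hd_Cons_tl length_0_conv length_tl diff_Suc_1)
  moreover have "hd p = []" using calculation(1) P(1) by simp
  moreover have "1 \<le> length p" using P(1) by (simp add: Suc_leI)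
  ultimately show ?case by auto
next
  case (Suc m)
  define L where "L = length p"
  have P: "p \<noteq> []" "hd p = replicate (Suc m) x" "last p = replicate (Suc m) y"
    "set p \<subseteq> hanoi_vertices (Suc m)"
    "\<And>k. Suc k < L \<Longrightarrow> hanoi_adj (Suc m) (p ! k) (p ! Suc k)"
    using Suc.prems(4) unfolding hanoi_path_def L_def by auto
  have L0: "0 < L" using P(1) L_def by auto
  have vert: "\<And>i. i < L \<Longrightarrow> p ! i \<in> hanoi_vertices (Suc m)"
    using P(4) L_def nth_mem by blast
  have ne: "\<And>i. i < L \<Longrightarrow> p ! i \<noteq> []"
    using vert unfolding hanoi_vertices_def by fastforce
  have le2: "\<And>i. i < L \<Longrightarrow> last (p ! i) \<le> 2"
  proof -
    fix i assume i: "i < L"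
    have "last (p ! i) \<in> set (p ! i)" using ne[OF i] by simp
    then show "last (p ! i) \<le> 2" using vert[OF i] unfolding hanoi_vertices_def by auto
  qed
  have dec: "\<And>i. i < L \<Longrightarrow> p ! i = butlast (p ! i) @ [last (p ! i)]"
    using ne by simp
  have p0: "last (p ! 0) = x" using P(2) P(1) by (simp add: hd_conv_nth[symmetric])
  have pL: "last (p ! (L - 1)) = y"
  proof -
    have "p ! (L - 1) = last p" using P(1) L_def by (simp add: last_conv_nth)
    then show ?thesis using P(3) by simp
  qed
  define j where "j = (LEAST j. j < L \<and> last (p ! j) \<noteq> x)"
  have exj: "L - 1 < L \<and> last (p ! (L - 1)) \<noteq> x" using pL L0 Suc.prems by auto
  have jP: "j < L \<and> last (p ! j) \<noteq> x"
    unfolding j_def by (rule LeastI[where P="\<lambda>j. j < L \<and> last (p ! j) \<noteq> x", OF exj])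
  then have j: "j < L" "last (p ! j) \<noteq> x" by auto
  have jmin: "\<And>i. i < j \<Longrightarrow> last (p ! i) = x"
  proof -
    fix i assume i: "i < j"
    have "\<not> (i < L \<and> last (p ! i) \<noteq> x)"
      using i unfolding j_def by (rule not_less_Least)
    then show "last (p ! i) = x" using i j(1) by auto
  qed
  have j0: "0 < j" using j p0 by (cases j) auto
  define j' where "j' = (GREATEST k. k < L \<and> last (p ! k) \<noteq> y)"
  have exj': "0 < L \<and> last (p ! 0) \<noteq> y" using p0 L0 Suc.prems by auto
  have j'P: "j' < L \<and> last (p ! j') \<noteq> y"
    unfolding j'_def by (rule GreatestI_nat[where P="\<lambda>k. k < L \<and> last (p ! k) \<noteq> y" and b=L, OF exj']) auto
  then have j': "j' < L" "last (p ! j') \<noteq> y" by auto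
  have jmax: "\<And>i. j' < i \<Longrightarrow> i < L \<Longrightarrow> last (p ! i) = y"
  proof (rule ccontr)
    fix i assume "j' < i" "i < L" "last (p ! i) \<noteq> y"
    then have "i \<le> j'" unfolding j'_def
      by (intro Greatest_le_nat[where P="\<lambda>k. k < L \<and> last (p ! k) \<noteq> y" and b=L]) auto
    then show False using \<open>j' < i\<close> by simp
  qed
  have jj: "j \<le> Suc j'"
  proof (rule ccontr)
    assume "\<not> j \<le> Suc j'"
    then have "last (p ! (j - 1)) = y" using jmax[of "j - 1"] j by auto
    moreover have "last (p ! (j - 1)) = x" using jmin j0 by auto
    ultimately show False using Suc.prems by auto
  qed
  have j'L: "Suc j' < L"
  proof (rule ccontr)
    assume "\<not> Suc j' < L"
    then have "j' = L - 1" using j' by auto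
    then show False using j' pL by auto
  qed
  define d' where "d' = last (p ! j)"
  have adj1: "hanoi_adj (Suc m) (butlast (p ! (j - 1)) @ [x]) (butlast (p ! j) @ [d'])"
    using P(5)[of "j - 1"] j j0 dec[of "j - 1"] dec[of j] jmin[of "j - 1"] unfolding d'_def by auto
  have w1: "butlast (p ! (j - 1)) = replicate m (third x d')"
    using adj_decomp[OF adj1] j(2) unfolding d'_def by auto
  have d'2: "d' \<le> 2" using le2 j unfolding d'_def by auto
  define c where "c = third x d'"
  have c: "c \<le> 2" "c \<noteq> x" using third_props[of x d'] Suc.prems d'2 j(2) unfolding c_def d'_def by auto
  define T where "T = take j p"
  have T1: "hanoi_path (Suc m) (replicate (Suc m) x) (p ! (j - 1)) T"
    using path_take[OF Suc.prems(4) j0] j L_def unfolding T_def by auto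
  have Tl: "\<forall>q\<in>set T. last q = x" "\<forall>q\<in>set T. q \<noteq> []"
    unfolding T_def using jmin ne j by (auto simp: in_set_conv_nth)
  have T2: "hanoi_path m (replicate m x) (replicate m c) (map butlast T)"
    using path_proj[OF T1 Tl(1)] w1 unfolding c_def butlast_replicate by simp
  have lenT: "length (map butlast T) = j" using j L_def unfolding T_def by simp
  have IH1: "2 ^ m \<le> j \<and> (j = 2 ^ m \<longrightarrow> map butlast T = geo m x c)"
    using Suc.IH[OF Suc.prems(1) c(1) c(2)[symmetric] T2] lenT by simp
  define e where "e = last (p ! j')"
  have adj2: "hanoi_adj (Suc m) (butlast (p ! j') @ [e]) (butlast (p ! Suc j') @ [y])"
    using P(5)[of j'] j'L dec[of j'] dec[of "Suc j'"] jmax[of "Suc j'"] unfolding e_def by auto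
  have w2: "butlast (p ! Suc j') = replicate m (third e y)" "butlast (p ! j') = butlast (p ! Suc j')"
    using adj_decomp[OF adj2] j'(2) unfolding e_def by auto
  have e2: "e \<le> 2" using le2 j' unfolding e_def by auto
  define c' where "c' = third e y"
  have c': "c' \<le> 2" "c' \<noteq> y" using third_props[of e y] Suc.prems e2 j'(2) unfolding c'_def e_def by auto
  define D where "D = drop (Suc j') p"
  have D1: "hanoi_path (Suc m) (p ! Suc j') (replicate (Suc m) y) D"
    using path_drop[OF Suc.prems(4)] j'L L_def unfolding D_def by auto
  have Dl: "\<forall>q\<in>set D. last q = y" "\<forall>q\<in>set D. q \<noteq> []"
    unfolding D_def using jmax ne j'L L_def by (auto simp: in_set_conv_nth)
  have D2: "hanoi_path m (replicate m c') (replicate m y) (map butlast D)"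
    using path_proj[OF D1 Dl(1)] w2 unfolding c'_def butlast_replicate by simp
  have lenD: "length (map butlast D) = L - Suc j'" using L_def unfolding D_def by simp
  have IH2: "2 ^ m \<le> L - Suc j' \<and> (L - Suc j' = 2 ^ m \<longrightarrow> map butlast D = geo m c' y)"
    using Suc.IH[OF c'(1) Suc.prems(2) c'(2) D2] lenD by simp
  have bound: "2 ^ Suc m \<le> L" using IH1 IH2 jj j'L by auto
  moreover have "L = 2 ^ Suc m \<longrightarrow> p = geo (Suc m) x y"
  proof
    assume L2: "L = 2 ^ Suc m"
    then have eqs: "j = 2 ^ m" "L - Suc j' = 2 ^ m" "j = Suc j'" using IH1 IH2 jj j'L by auto
    have "d' = y" using jmax[of j] eqs j unfolding d'_def by auto
    then have cc: "c = third x y" unfolding c_def by simp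
    have "e = x" using jmin[of j'] eqs unfolding e_def by auto
    then have cc': "c' = third x y" unfolding c'_def by simp
    have "p = T @ D" unfolding T_def D_def using eqs(3) by simp
    also have "\<dots> = map (\<lambda>w. w @ [x]) (map butlast T) @ map (\<lambda>w. w @ [y]) (map butlast D)"
      using snoc_restore[OF Tl] snoc_restore[OF Dl] by simp
    also have "\<dots> = geo (Suc m) x y" using IH1 IH2 eqs cc cc' by simp
    finally show "p = geo (Suc m) x y" .
  qed
  ultimately show ?case unfolding L_def by simp
qed

lemma geodesic_eq:
  assumes "x \<le> 2" "y \<le> 2" "x \<noteq> y"
  shows "hanoi_geodesic n x y = geo n x y"
  unfolding hanoi_geodesic_def
proof (rule the_equality)
  have g: "hanoi_path n (replicate n x) (replicate n y) (geo n x y)" "length (geo n x y) = 2 ^ n"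
    using geo_path[OF assms] by auto
  show "hanoi_shortest_path n (replicate n x) (replicate n y) (geo n x y)"
    unfolding hanoi_shortest_path_def
  proof (intro conjI allI impI)
    show "hanoi_path n (replicate n x) (replicate n y) (geo n x y)" by (rule g(1))
    fix q assume "hanoi_path n (replicate n x) (replicate n y) q"
    then have "2 ^ n \<le> length q" using geo_unique[OF assms] by blast
    then show "length (geo n x y) \<le> length q" using g(2) by simp
  qed
  fix q assume "hanoi_shortest_path n (replicate n x) (replicate n y) q"
  then have q: "hanoi_path n (replicate n x) (replicate n y) q"
    "\<forall>q'. hanoi_path n (replicate n x) (replicate n y) q' \<longrightarrow> length q \<le> length q'"
    unfolding hanoi_shortest_path_def by blast+
  from q(2) g(1) have "length q \<le> length (geo n x y)" by blast
  then have l: "length q \<le> 2 ^ n" using g(2) by simp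
  have u: "2 ^ n \<le> length q \<and> (length q = 2 ^ n \<longrightarrow> q = geo n x y)"
    by (rule geo_unique[OF assms q(1)])
  then have "length q = 2 ^ n" using l by linarith
  then show "q = geo n x y" using u by blast
qed

lemma bin_snoc: "bin_lsb (Suc m) i = bin_lsb m i @ [i div 2 ^ m mod 2]"
  unfolding bin_lsb_def by simp

lemma bin_shift:
  assumes "j < m"
  shows "(k + 2 ^ m) div 2 ^ j mod 2 = k div 2 ^ j mod (2::nat)"
proof -
  obtain t where t: "m = Suc (j + t)" using less_imp_Suc_add[OF assms] by blast
  have e: "(2::nat) ^ m = 2 ^ j * (2 * 2 ^ t)" unfolding t by (simp add: power_add)
  have "(k + 2 ^ j * (2 * 2 ^ t)) div 2 ^ j = k div 2 ^ j + 2 * 2 ^ t"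
    using div_mult_self2[of "2 ^ j :: nat" k "2 * 2 ^ t"] by simp
  then have "(k + 2 ^ m) div 2 ^ j = k div 2 ^ j + 2 * 2 ^ t" unfolding e .
  then show ?thesis by presburger
qed

lemma bin_high:
  assumes "k < 2 ^ m"
  shows "bin_lsb m (k + 2 ^ m) = bin_lsb m k"
  unfolding bin_lsb_def using bin_shift by simp

lemma trans_some:
  "x \<le> 2 \<Longrightarrow> y \<le> 2 \<Longrightarrow> x \<noteq> y \<Longrightarrow> i < 2 ^ n \<Longrightarrow>
   inv_transducer x y (rev (geo n x y ! i)) = Some (rev (bin_lsb n i))"
proof (induction n arbitrary: x y i)
  case 0
  then show ?case by (simp add: bin_lsb_def)
next
  case (Suc m)
  define z where "z = third x y"
  have z: "z \<le> 2" "z \<noteq> x" "z \<noteq> y"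
    using third_props[OF Suc.prems(1-3)] unfolding z_def by auto
  have l1: "length (geo m x z) = 2 ^ m" using geo_path[of x z m] Suc.prems z by auto
  show ?case
  proof (cases "i < 2 ^ m")
    case True
    then have "geo (Suc m) x y ! i = geo m x z ! i @ [x]"
      using l1 unfolding geo.simps z_def[symmetric] by (simp add: nth_append)
    moreover have "rev (bin_lsb (Suc m) i) = 0 # rev (bin_lsb m i)"
      using True by (simp add: bin_snoc)
    ultimately show ?thesis using Suc.IH[of x z i] Suc.prems z True by (simp add: z_def)
  next
    case False
    define k where "k = i - 2 ^ m"
    have k: "k < 2 ^ m" "i = k + 2 ^ m" using False Suc.prems(4) unfolding k_def by auto
    then have "geo (Suc m) x y ! i = geo m z y ! k @ [y]"
      using l1 geo_path[of z y m] Suc.prems z unfolding geo.simps z_def[symmetric]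
      by (simp add: nth_append)
    moreover have "(k + 2 ^ m) div 2 ^ m = (1::nat)"
      using k(1) by (metis div_add_self2 div_less add_0 power_not_zero zero_neq_numeral)
    then have "rev (bin_lsb (Suc m) i) = 1 # rev (bin_lsb m k)"
      unfolding k(2) bin_snoc bin_high[OF k(1)] by simp
    ultimately show ?thesis using Suc.IH[of z y k] Suc.prems z k by (simp add: z_def)
  qed
qed

lemma trans_none:
  "x \<le> 2 \<Longrightarrow> y \<le> 2 \<Longrightarrow> x \<noteq> y \<Longrightarrow> inv_transducer x y u \<noteq> None \<Longrightarrow>
   rev u \<in> set (geo (length u) x y)"
proof (induction u arbitrary: x y)
  case Nil
  then show ?case by simp
next
  case (Cons c cs)
  define z where "z = third x y"
  have z: "z \<le> 2" "z \<noteq> x" "z \<noteq> y"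
    using third_props[OF Cons.prems(1-3)] unfolding z_def by auto
  show ?case
  proof (cases "c = x")
    case True
    then have "inv_transducer x z cs \<noteq> None" using Cons.prems unfolding z_def by auto
    then have "rev cs \<in> set (geo (length cs) x z)" using Cons.IH[of x z] Cons.prems z by auto
    then show ?thesis using True unfolding z_def by auto
  next
    case False
    then have "c = y" using Cons.prems by (auto split: if_splits)
    then have "inv_transducer z y cs \<noteq> None" using Cons.prems False unfolding z_def by auto
    then have "rev cs \<in> set (geo (length cs) z y)" using Cons.IH[of z y] Cons.prems z by auto
    then show ?thesis using \<open>c = y\<close> unfolding z_def by auto
  qed
qed

theorem mainTheorem15:
  fixes n x y :: nat and u :: "nat list"
  assumes "n \<ge> 1" and "x \<le> 2" and "y \<le> 2" and "x \<noteq> y"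
    and "u \<in> hanoi_vertices n"
  shows "(inv_transducer x y u \<noteq> None \<longleftrightarrow> rev u \<in> set (hanoi_geodesic n x y))
    \<and> (\<forall>i. i < length (hanoi_geodesic n x y) \<and> hanoi_geodesic n x y ! i = rev u \<longrightarrow>
          inv_transducer x y u = Some (rev (bin_lsb n i)))"
proof -
  have G: "hanoi_geodesic n x y = geo n x y" using geodesic_eq assms by auto
  have len: "length u = n" using assms(5) unfolding hanoi_vertices_def by auto
  have lg: "length (geo n x y) = 2 ^ n" using geo_path assms by auto
  have S: "\<And>i. i < length (geo n x y) \<Longrightarrow> geo n x y ! i = rev u \<Longrightarrow>
      inv_transducer x y u = Some (rev (bin_lsb n i))"
    using trans_some[OF assms(2-4)] lg by (metis rev_rev_ident)
  show ?thesis
  proof (intro conjI allI impI iffI)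
    assume "inv_transducer x y u \<noteq> None"
    then show "rev u \<in> set (hanoi_geodesic n x y)" using trans_none[OF assms(2-4)] len G by auto
  next
    assume "rev u \<in> set (hanoi_geodesic n x y)"
    then obtain i where "i < length (geo n x y)" "geo n x y ! i = rev u"
      using G by (auto simp: in_set_conv_nth)
    then show "inv_transducer x y u \<noteq> None" using S by auto
  next
    fix i assume "i < length (hanoi_geodesic n x y) \<and> hanoi_geodesic n x y ! i = rev u"
    then show "inv_transducer x y u = Some (rev (bin_lsb n i))" using S G by auto
  qed
qed

end
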